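(* Let $(X_n,\|\cdot\|_n)_{n\ge1}$ be a sequence of Banach spaces and $(X,\|\cdot\|)$ the space defined in the context. Let $(x_m)_{m\ge1}$ be a bounded sequence in $X$ and $x\in X\setminus\{0\}$ with $x_m\overset{p}{\to}x$. Then there exists an infinite subset $M\subseteq\mathbb{N}$ such that the norms of the vectors of the set $\{x_m:m\in M\}\cup\{x\}$ have the same representation.
   Context: $c_{00}((X_n))$ is the vector space of sequences $(x_1,x_2,\dots)$ with $x_k\in X_k$ and only finitely many $x_k\ne0$; $(x_1,\dots,x_n)$ denotes $(x_1,\dots,x_n,0,0,\dots)$. On $c_{00}((X_n))$ define inductively $\|(x_1)\|=\|x_1\|_1$ (the norm of $X_1$) and, for $n\ge2$, $$\|(x_1,\dots,x_n)\|=\Big(1-\tfrac{1}{n+1}\Big)\big(\|x_n\|_n+\|(x_1,\dots,x_{n-1})\|\big)+\tfrac{1}{n+1}\max\Big\{\tfrac{\|x_n\|_n}{n},\ \|(x_1,\dots,x_{n-1})\|\Big\}.$$ $X$ is the completion of $(c_{00}((X_n)),\|\cdot\|)$, identified with the space of sequences $x=(x_n)$, $x_n\in X_n$, with $\sum_n\|x_n\|_n<\infty$, where $\|x\|=\lim_k\|(x_1,\dots,x_k)\|$. For a sequence $x_m=(x_{m1},x_{m2},\dots)\in X$ and $x=(x_1,x_2,\dots)\in X$, write $x_m\overset{p}{\to}x$ (pointwise convergence) if $\|x_{mn}-x_n\|_n\to0$ as $m\to\infty$ for every $n\in\mathbb{N}$. Two vectors $x=(x_n),y=(y_n)\in X$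 have norms with the same representation if there exist sequences $(d_n)_{n\ge1},(s_n)_{n\ge1}\subseteq(0,1]$ with $\|x\|=\sum_n d_n\|x_n\|_n$, $\|y\|=\sum_n s_n\|y_n\|_n$ and $d_n=s_n$ for every $n$; the norms of the vectors of a set have the same representation if there is a single sequence $(d_n)\subseteq(0,1]$ with $\|z\|=\sum_n d_n\|z_n\|_n$ for every $z$ in the set. *)

theory Defs
  imports "HOL-Analysis.Analysis"
begin

text \<open>The spaces X_n (n \<ge> 1) are modelled as closed linear subspaces S n of one
  ambient Banach space 'a (every countable family of Banach spaces embeds
  isometrically this way, e.g. into its l-infinity sum). Vectors of X are
  sequences z :: nat \<Rightarrow> 'a indexed from 1 (z 0 = 0), with z n \<in> S n.\<close>

definition banach_family :: "(nat \<Rightarrow> 'a::banach set) \<Rightarrow> bool" where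
  "banach_family S \<longleftrightarrow> (\<forall>n\<ge>1. subspace (S n) \<and> closed (S n))"

text \<open>tnorm z k = norm of the truncation (z 1, ..., z k, 0, 0, ...).\<close>
fun tnorm :: "(nat \<Rightarrow> 'a::real_normed_vector) \<Rightarrow> nat \<Rightarrow> real" where
  "tnorm z 0 = 0"
| "tnorm z (Suc 0) = norm (z 1)"
| "tnorm z (Suc (Suc k)) =
     (1 - 1 / real (Suc (Suc k) + 1)) * (norm (z (Suc (Suc k))) + tnorm z (Suc k))
     + 1 / real (Suc (Suc k) + 1) * max (norm (z (Suc (Suc k))) / real (Suc (Suc k))) (tnorm z (Suc k))"

definition Xspace :: "(nat \<Rightarrow> 'a::banach set) \<Rightarrow> (nat \<Rightarrow> 'a) set" where
  "Xspace S = {z. z 0 = 0 \<and> (\<forall>n\<ge>1. z n \<in> S n) \<and> summable (\<lambda>n. norm (z n))}"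

definition Xnorm :: "(nat \<Rightarrow> 'a::real_normed_vector) \<Rightarrow> real" where
  "Xnorm z = lim (\<lambda>k. tnorm z k)"

definition pconv :: "(nat \<Rightarrow> nat \<Rightarrow> 'a::real_normed_vector) \<Rightarrow> (nat \<Rightarrow> 'a) \<Rightarrow> bool" where
  "pconv xs x \<longleftrightarrow> (\<forall>n\<ge>1. (\<lambda>m. norm (xs m n - x n)) \<longlonglongrightarrow> 0)"

definition same_repr :: "(nat \<Rightarrow> 'a::real_normed_vector) set \<Rightarrow> bool" where
  "same_repr A \<longleftrightarrow> (\<exists>d::nat \<Rightarrow> real. (\<forall>n\<ge>1. 0 < d n \<and> d n \<le> 1) \<and>
       (\<forall>z\<in>A. (\<lambda>n. if n = 0 then 0 else d n * norm (z n)) sums Xnorm z))"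

end

theory Submission
  imports Defs
begin


lemma tnorm_SS: "tnorm z (Suc (Suc k)) =
     (1 - 1 / (real k + 3)) * (norm (z (Suc (Suc k))) + tnorm z (Suc k))
     + 1 / (real k + 3) * max (norm (z (Suc (Suc k))) / (real k + 2)) (tnorm z (Suc k))"
  by (simp add: add.commute)

lemma tnorm_nonneg: "0 \<le> tnorm z k"
proof (induction z k rule: tnorm.induct)
  case (3 z k)
  have "0 \<le> 1 - 1 / (real k + 3)" by (simp add: field_simps)
  moreover have "0 \<le> max (norm (z (Suc (Suc k))) / (real k + 2)) (tnorm z (Suc k))" using 3 by simp
  ultimately show ?case unfolding tnorm_SS using 3 by (intro add_nonneg_nonneg mult_nonneg_nonneg) auto
qed auto

lemma tnorm_mono: "tnorm z k \<le> tnorm z (Suc k)"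
proof (cases k)
  case 0 then show ?thesis by simp
next
  case (Suc k')
  let ?a = "norm (z (Suc (Suc k')))" and ?b = "tnorm z (Suc k')" and ?N = "real k' + 3"
  have b: "0 \<le> ?b" by (rule tnorm_nonneg)
  have c: "0 \<le> 1 - 1 / ?N" by (simp add: field_simps)
  have "?b \<le> (1 - 1 / ?N) * ?a + ((1 - 1 / ?N) * ?b + 1 / ?N * ?b)"
  proof -
    have "0 \<le> (1 - 1 / ?N) * ?a" using c by simp
    moreover have "(1 - 1 / ?N) * ?b + 1 / ?N * ?b = ?b" by (simp add: algebra_simps)
    ultimately show ?thesis by linarith
  qed
  also have "\<dots> = (1 - 1 / ?N) * (?a + ?b) + 1 / ?N * ?b" by (simp add: algebra_simps)
  also have "\<dots> \<le> (1 - 1 / ?N) * (?a + ?b) + 1 / ?N * max (?a / (real k' + 2)) ?b"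
    by (intro add_left_mono mult_left_mono) auto
  finally show ?thesis using Suc by (simp only: tnorm_SS)
qed

lemma tnorm_incseq: "incseq (tnorm z)"
  by (rule incseq_SucI) (rule tnorm_mono)

lemma tnorm_le_sum: "tnorm z k \<le> (\<Sum>n<Suc k. norm (z n))"
proof (induction z k rule: tnorm.induct)
  case (1 z) then show ?case by simp
next
  case (2 z) then show ?case by simp
next
  case (3 z k)
  let ?a = "norm (z (Suc (Suc k)))" and ?b = "tnorm z (Suc k)" and ?N = "real k + 3"
  have b: "0 \<le> ?b" by (rule tnorm_nonneg)
  have m: "max (?a / (real k + 2)) ?b \<le> ?a + ?b"
    using b by (auto simp: field_simps)
  have "tnorm z (Suc (Suc k)) \<le> (1 - 1 / ?N) * (?a + ?b) + 1 / ?N * (?a + ?b)"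
    unfolding tnorm_SS by (intro add_left_mono mult_left_mono m) auto
  also have "\<dots> = ?a + ?b" by (simp add: algebra_simps)
  also have "\<dots> \<le> ?a + (\<Sum>n<Suc (Suc k). norm (z n))" using 3 by simp
  finally show ?case by simp
qed

lemma norm_le_tnorm: "k \<ge> 1 \<Longrightarrow> norm (z k) \<le> 2 * tnorm z k"
proof -
  assume "k \<ge> 1"
  then obtain j where "k = Suc j" by (cases k) auto
  show ?thesis
  proof (cases j)
    case 0 then show ?thesis using \<open>k = Suc j\<close> by simp
  next
    case (Suc k')
    let ?a = "norm (z (Suc (Suc k')))" and ?b = "tnorm z (Suc k')" and ?N = "real k' + 3"
    have b: "0 \<le> ?b" by (rule tnorm_nonneg)
    have "?a \<le> 2 * ((1 - 1 / ?N) * (?a + ?b))"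
      using b by (simp add: field_simps)
    also have "\<dots> \<le> 2 * ((1 - 1 / ?N) * (?a + ?b) + 1 / ?N * max (?a / (real k' + 2)) ?b)"
      using b by (simp add: max_def)
    finally show ?thesis using \<open>k = Suc j\<close> Suc by (simp only: tnorm_SS)
  qed
qed

lemma tnorm_le_Xnorm:
  assumes "summable (\<lambda>n. norm (z n))"
  shows "tnorm z k \<le> Xnorm z" "tnorm z \<longlonglongrightarrow> Xnorm z"
proof -
  have "\<forall>i. tnorm z i \<le> suminf (\<lambda>n. norm (z n))"
  proof
    fix i
    have "(\<Sum>n<Suc i. norm (z n)) \<le> suminf (\<lambda>n. norm (z n))"
      by (rule sum_le_suminf[OF assms]) auto
    then show "tnorm z i \<le> suminf (\<lambda>n. norm (z n))" using tnorm_le_sum[of z i] by linarith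
  qed
  then obtain L where L: "tnorm z \<longlonglongrightarrow> L" "\<forall>i. tnorm z i \<le> L"
    using incseq_convergent[OF tnorm_incseq] by blast
  have "Xnorm z = L" unfolding Xnorm_def using L(1) by (rule limI)
  then show "tnorm z k \<le> Xnorm z" "tnorm z \<longlonglongrightarrow> Xnorm z" using L by auto
qed

lemma tnorm_cont:
  assumes "\<forall>n\<ge>1. (\<lambda>m. norm (xs m n - x n)) \<longlonglongrightarrow> 0"
  shows "(\<lambda>m. tnorm (xs m) k) \<longlonglongrightarrow> tnorm x k"
proof -
  have nc: "(\<lambda>m. norm (xs m n)) \<longlonglongrightarrow> norm (x n)" if "n \<ge> 1" for n
  proof -
    have "(\<lambda>m. xs m n - x n) \<longlonglongrightarrow> 0" using assms that tendsto_norm_zero_iff by blast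
    then have "(\<lambda>m. xs m n) \<longlonglongrightarrow> x n" by (simp add: LIM_zero_iff)
    then show ?thesis by (rule tendsto_norm)
  qed
  have xc: "(\<lambda>m. xs m n) \<longlonglongrightarrow> x n" if "n \<ge> 1" for n
  proof -
    have "(\<lambda>m. xs m n - x n) \<longlonglongrightarrow> 0" using assms that tendsto_norm_zero_iff by blast
    then show ?thesis by (simp add: LIM_zero_iff)
  qed
  show ?thesis
  proof (induction k)
    case 0 then show ?case by simp
  next
    case (Suc k)
    show ?case
    proof (cases k)
      case 0 then show ?thesis using nc[of 1] by simp
    next
      case (Suc k')
      have "(\<lambda>m. (1 - 1 / (real k' + 3)) * (norm (xs m (Suc (Suc k'))) + tnorm (xs m) (Suc k'))
     + 1 / (real k' + 3) * max (norm (xs m (Suc (Suc k'))) / (real k' + 2)) (tnorm (xs m) (Suc k')))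
        \<longlonglongrightarrow> (1 - 1 / (real k' + 3)) * (norm (x (Suc (Suc k'))) + tnorm x (Suc k'))
     + 1 / (real k' + 3) * max (norm (x (Suc (Suc k'))) / (real k' + 2)) (tnorm x (Suc k'))"
        using Suc.IH Suc xc[of "Suc (Suc k')"]
        by (intro tendsto_intros) auto
      then show ?thesis using Suc by (simp only: tnorm_SS)
    qed
  qed
qed



definition alpha :: "(nat \<Rightarrow> bool) \<Rightarrow> nat \<Rightarrow> real" where
  "alpha p n = (if n \<le> 1 then 1 else if p n then (real n ^ 2 + 1) / (real n * (real n + 1)) else real n / (real n + 1))"

definition beta :: "(nat \<Rightarrow> bool) \<Rightarrow> nat \<Rightarrow> real" where
  "beta p n = (if p n then real n / (real n + 1) else 1)"

definition compat :: "(nat \<Rightarrow> bool) \<Rightarrow> (nat \<Rightarrow> 'a::real_normed_vector) \<Rightarrow> bool" where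
  "compat p z \<longleftrightarrow> (\<forall>k\<ge>2. (p k \<longrightarrow> tnorm z (k - 1) \<le> norm (z k) / real k)
                      \<and> (\<not> p k \<longrightarrow> norm (z k) / real k \<le> tnorm z (k - 1)))"

lemma alg1: "(N::real) > 0 \<Longrightarrow> (1 - 1 / (N + 1)) * (a + b) + 1 / (N + 1) * (a / N)
   = (N ^ 2 + 1) / (N * (N + 1)) * a + N / (N + 1) * b"
proof -
  assume N: "N > 0"
  then have h: "N + 1 > 0" "N * (N + 1) > 0" by auto
  have e: "1 - 1 / (N + 1) = N / (N + 1)" using h by (simp add: field_simps)
  show ?thesis unfolding e using h N
    by (simp add: divide_simps power2_eq_square) (simp add: algebra_simps)
qed

lemma alg2: "(N::real) > 0 \<Longrightarrow> (1 - 1 / (N + 1)) * (a + b) + 1 / (N + 1) * b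
   = N / (N + 1) * a + 1 * b"
proof -
  assume N: "N > 0"
  then have h: "N + 1 > 0" "N * (N + 1) > 0" by auto
  have e: "1 - 1 / (N + 1) = N / (N + 1)" using h by (simp add: field_simps)
  show ?thesis unfolding e using h N
    by (simp add: divide_simps) (simp add: algebra_simps)
qed

lemma alg3: "(n::nat) \<ge> 2 \<Longrightarrow> 0 < (real n ^ 2 + 1) / (real n * (real n + 1)) \<and> (real n ^ 2 + 1) / (real n * (real n + 1)) \<le> 1"
proof -
  assume "n \<ge> 2"
  then have n: "real n \<ge> 2" by simp
  then have p: "real n * (real n + 1) > 0" by simp
  have "real n ^ 2 + 1 \<le> real n * (real n + 1)" using n by (simp add: power2_eq_square algebra_simps)
  moreover have "0 < real n ^ 2 + 1" using zero_le_power2[of "real n"] by linarith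
  ultimately show ?thesis using p by (simp add: divide_le_eq_1)
qed

lemma alpha_pos: "0 < alpha p n" "alpha p n \<le> 1"
  using alg3[of n] unfolding alpha_def by auto

lemma beta_pos: "n > 0 \<Longrightarrow> 0 < beta p n" "beta p n \<le> 1"
  unfolding beta_def by auto

lemma tnorm_step_repr:
  assumes "compat p z"
  shows "tnorm z (Suc (Suc k)) = alpha p (Suc (Suc k)) * norm (z (Suc (Suc k))) + beta p (Suc (Suc k)) * tnorm z (Suc k)"
proof -
  let ?a = "norm (z (Suc (Suc k)))" and ?b = "tnorm z (Suc k)" and ?N = "real k + 2"
  have N: "?N > 0" by simp
  have e: "tnorm z (Suc (Suc k)) = (1 - 1 / (?N + 1)) * (?a + ?b) + 1 / (?N + 1) * max (?a / ?N) ?b"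
    unfolding tnorm_SS by (simp add: add.assoc)
  have r: "real (Suc (Suc k)) = ?N" by simp
  show ?thesis
  proof (cases "p (Suc (Suc k))")
    case True
    then have "?b \<le> ?a / ?N" using assms unfolding compat_def
      by (metis add_2_eq_Suc diff_Suc_1 le_add1 r)
    then have "max (?a / ?N) ?b = ?a / ?N" by simp
    then show ?thesis using True unfolding e alpha_def beta_def r using alg1[OF N] by simp
  next
    case False
    then have "?a / ?N \<le> ?b" using assms unfolding compat_def
      by (metis add_2_eq_Suc diff_Suc_1 le_add1 r)
    then have "max (?a / ?N) ?b = ?b" by simp
    then show ?thesis using False unfolding e alpha_def beta_def r using alg2[OF N] by simp
  qed
qed

lemma tnorm_repr:
  assumes "compat p z" "k \<ge> 1"
  shows "tnorm z k = (\<Sum>n\<in>{1..k}. alpha p n * (\<Prod>j\<in>{n<..k}. beta p j) * norm (z n))"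
  using assms(2)
proof (induction k rule: nat_induct_at_least)
  case base then show ?case by (simp add: alpha_def)
next
  case (Suc k)
  then obtain k' where k': "k = Suc k'" by (cases k) auto
  have pr: "(\<Prod>j\<in>{n<..Suc k}. beta p j) = beta p (Suc k) * (\<Prod>j\<in>{n<..k}. beta p j)" if "n \<in> {1..k}" for n
  proof -
    have "{n<..Suc k} = insert (Suc k) {n<..k}" using that by auto
    then show ?thesis by simp
  qed
  have "tnorm z (Suc k) = alpha p (Suc k) * norm (z (Suc k)) + beta p (Suc k) * tnorm z k"
    using tnorm_step_repr[OF assms(1), of k'] k' by simp
  also have "\<dots> = alpha p (Suc k) * norm (z (Suc k)) +
     (\<Sum>n\<in>{1..k}. alpha p n * (\<Prod>j\<in>{n<..Suc k}. beta p j) * norm (z n))"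
    unfolding Suc.IH sum_distrib_left by (intro arg_cong2[where f="(+)"] refl sum.cong) (auto simp: pr)
  also have "\<dots> = (\<Sum>n\<in>{1..Suc k}. alpha p n * (\<Prod>j\<in>{n<..Suc k}. beta p j) * norm (z n))"
    by (simp add: sum.cl_ivl_Suc)
  finally show ?case .
qed

lemma same_repr_crit:
  assumes K: "\<forall>k>K. \<not> p k"
    and A: "\<forall>z\<in>A. compat p z \<and> summable (\<lambda>n. norm (z n))"
  shows "same_repr A"
proof -
  define d where "d n = alpha p n * (\<Prod>j\<in>{n<..K}. beta p j)" for n
  have d01: "0 < d n \<and> d n \<le> 1" for n
  proof -
    have "0 < (\<Prod>j\<in>{n<..K}. beta p j)" by (intro prod_pos) (simp add: beta_pos)
    moreover have "(\<Prod>j\<in>{n<..K}. beta p j) \<le> 1"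
      by (intro prod_le_1) (auto simp: less_imp_le beta_pos)
    ultimately show ?thesis unfolding d_def using alpha_pos[of p n]
      by (simp add: mult_le_one)
  qed
  have prK: "(\<Prod>j\<in>{n<..k}. beta p j) = (\<Prod>j\<in>{n<..K}. beta p j)" if "k \<ge> K" for n k
    by (rule prod.mono_neutral_right) (use that K in \<open>auto simp: beta_def\<close>)
  show ?thesis unfolding same_repr_def
  proof (intro exI[of _ d] conjI ballI allI impI)
    fix n :: nat show "0 < d n" "d n \<le> 1" using d01 by auto
  next
    fix z assume "z \<in> A"
    then have cz: "compat p z" and sz: "summable (\<lambda>n. norm (z n))" using A by auto
    define f where "f n = (if n = 0 then 0 else d n * norm (z n))" for n
    have dn: "\<bar>d n * norm (z n)\<bar> \<le> norm (z n)" for n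
      using d01[of n] by (simp add: abs_mult mult_left_le_one_le)
    have "summable f"
      by (rule summable_comparison_test[OF _ sz]) (intro exI[of _ 0] allI impI, simp add: f_def dn)
    then have lim: "(\<lambda>k. \<Sum>n<k. f n) \<longlonglongrightarrow> suminf f" by (rule summable_LIMSEQ)
    then have lim2: "(\<lambda>k. \<Sum>n<Suc k. f n) \<longlonglongrightarrow> suminf f" by (rule LIMSEQ_Suc)
    have ev: "eventually (\<lambda>k. (\<Sum>n<Suc k. f n) = tnorm z k) sequentially"
      unfolding eventually_sequentially
    proof (intro exI[of _ "Suc K"] allI impI)
      fix k assume k: "Suc K \<le> k"
      have "(\<Sum>n<Suc k. f n) = (\<Sum>n\<in>{0..k}. f n)" by (simp add: atLeast0AtMost lessThan_Suc_atMost)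
      also have "\<dots> = f 0 + (\<Sum>n\<in>{Suc 0..k}. f n)" by (rule sum.atLeast_Suc_atMost) simp
      also have "\<dots> = (\<Sum>n\<in>{1..k}. f n)" by (simp add: f_def)
      also have "\<dots> = (\<Sum>n\<in>{1..k}. alpha p n * (\<Prod>j\<in>{n<..k}. beta p j) * norm (z n))"
      proof (intro sum.cong refl)
        fix n assume "n \<in> {1..k}"
        then show "f n = alpha p n * (\<Prod>j\<in>{n<..k}. beta p j) * norm (z n)"
          using prK[of k n] k by (simp add: f_def d_def)
      qed
      also have "\<dots> = tnorm z k" using tnorm_repr[OF cz, of k] k by simp
      finally show "(\<Sum>n<Suc k. f n) = tnorm z k" .
    qed
    have "tnorm z \<longlonglongrightarrow> suminf f" by (rule Lim_transform_eventually[OF lim2 ev])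
    then have "Xnorm z = suminf f" unfolding Xnorm_def by (rule limI)
    then show "(\<lambda>n. if n = 0 then 0 else d n * norm (z n)) sums Xnorm z"
      using \<open>summable f\<close> summable_sums unfolding f_def[abs_def] by fastforce
  qed
qed



theorem proposition1p10:
  fixes S :: "nat \<Rightarrow> 'a::banach set"
    and xs :: "nat \<Rightarrow> nat \<Rightarrow> 'a" and x :: "nat \<Rightarrow> 'a"
  assumes "banach_family S"
    and "\<forall>m. xs m \<in> Xspace S"
    and "\<exists>B. \<forall>m. Xnorm (xs m) \<le> B"
    and "x \<in> Xspace S" and "x \<noteq> (\<lambda>_. 0)"
    and "pconv xs x"
  shows "\<exists>M::nat set. infinite M \<and> same_repr (xs ` M \<union> {x})"
proof -
  obtain B where B: "\<forall>m. Xnorm (xs m) \<le> B" using assms(3) by blast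
  have sxs: "summable (\<lambda>n. norm (xs m n))" for m using assms(2) unfolding Xspace_def by auto
  have sx: "summable (\<lambda>n. norm (x n))" and x0: "x 0 = 0" using assms(4) unfolding Xspace_def by auto
  have pc: "\<forall>n\<ge>1. (\<lambda>m. norm (xs m n - x n)) \<longlonglongrightarrow> 0" using assms(6) unfolding pconv_def by auto
  obtain n0 where xn0: "x n0 \<noteq> 0" using assms(5) by auto
  have n0: "n0 \<ge> 1" using xn0 x0 by (cases n0) auto
  define \<delta> where "\<delta> = tnorm x n0"
  have \<delta>: "\<delta> > 0" using norm_le_tnorm[OF n0, of x] xn0 unfolding \<delta>_def
    using zero_less_norm_iff[of "x n0"] by linarith
  define B' where "B' = max B (Xnorm x)"
  have B'0: "0 \<le> B'" unfolding B'_def using tnorm_le_Xnorm(1)[OF sx, of 0] by simp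
  have bnd: "norm (z k) \<le> 2 * B'" if "k \<ge> 1" "z = x \<or> (\<exists>m. z = xs m)" for z k
  proof -
    have "summable (\<lambda>n. norm (z n))" and "Xnorm z \<le> B'" using that sx sxs B unfolding B'_def by (auto intro: le_max_iff_disj[THEN iffD2])
    then show ?thesis using norm_le_tnorm[OF that(1), of z] tnorm_le_Xnorm(1)[of z k] by linarith
  qed
  define K where "K = n0 + nat \<lceil>4 * B' / \<delta>\<rceil>"
  have Kn0: "n0 \<le> K" unfolding K_def by simp
  have bigk: "norm (z k) / real k < \<delta> / 2" if "k > K" "z = x \<or> (\<exists>m. z = xs m)" for z k
  proof -
    have "real k > 4 * B' / \<delta>" using that(1) unfolding K_def by linarith
    then have kd: "real k * \<delta> > 4 * B'" using \<delta> by (simp add: field_simps)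
    have k0: "real k > 0" using that(1) by simp
    have "norm (z k) \<le> 2 * B'" using bnd[of k z] that n0 Kn0 by simp
    then have "norm (z k) < real k * (\<delta> / 2)" using kd B'0 by linarith
    then show ?thesis using k0 by (simp add: divide_less_eq mult.commute)
  qed
  define g where "g z k = norm (z k) / real k - tnorm z (k - 1)" for z :: "nat \<Rightarrow> 'a" and k
  have gc: "(\<lambda>m. g (xs m) k) \<longlonglongrightarrow> g x k" if k1: "k \<ge> 1" for k
  proof -
    have "(\<lambda>m. xs m k - x k) \<longlonglongrightarrow> 0" using pc that tendsto_norm_zero_iff by blast
    then have "(\<lambda>m. xs m k) \<longlonglongrightarrow> x k" by (simp add: LIM_zero_iff)
    moreover have kne: "real k \<noteq> 0" using k1 by simp
    ultimately show ?thesis unfolding g_def by (intro tendsto_intros tnorm_cont[OF pc]) auto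
  qed
  have ev1: "eventually (\<lambda>m. \<forall>k\<in>{2..K}. (g x k > 0 \<longrightarrow> g (xs m) k > 0) \<and> (g x k < 0 \<longrightarrow> g (xs m) k < 0)) sequentially"
  proof (rule eventually_ball_finite, simp, intro ballI)
    fix k assume "k \<in> {2..K}"
    then have k1: "k \<ge> 1" by simp
    show "eventually (\<lambda>m. (g x k > 0 \<longrightarrow> g (xs m) k > 0) \<and> (g x k < 0 \<longrightarrow> g (xs m) k < 0)) sequentially"
    proof (cases "g x k > 0")
      case True
      have "eventually (\<lambda>m. g (xs m) k > 0) sequentially" using order_tendstoD(1)[OF gc[OF k1] True] .
      then show ?thesis by eventually_elim (use True in auto)
    next
      case False
      show ?thesis
      proof (cases "g x k < 0")
        case True
        have "eventually (\<lambda>m. g (xs m) k < 0) sequentially" using order_tendstoD(2)[OF gc[OF k1] True] .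
        then show ?thesis by eventually_elim (use True in auto)
      next
        case False2: False
        show ?thesis using False False2 by simp
      qed
    qed
  qed
  have ev2: "eventually (\<lambda>m. tnorm (xs m) n0 > \<delta> / 2) sequentially"
  proof -
    have "\<delta> / 2 < \<delta>" using \<delta> by simp
    then show ?thesis using order_tendstoD(1)[OF tnorm_cont[OF pc, of n0]] unfolding \<delta>_def by blast
  qed
  obtain m2 where m2: "\<And>m. m \<ge> m2 \<Longrightarrow> (\<forall>k\<in>{2..K}. (g x k > 0 \<longrightarrow> g (xs m) k > 0) \<and> (g x k < 0 \<longrightarrow> g (xs m) k < 0))
      \<and> tnorm (xs m) n0 > \<delta> / 2"
    using eventually_conj[OF ev1 ev2] unfolding eventually_sequentially by blast
  have tail: "norm (z k) / real k < tnorm z (k - 1)" if "k > K" "z = x \<or> (\<exists>m\<ge>m2. z = xs m)" for z k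
  proof -
    have mono: "tnorm z n0 \<le> tnorm z (k - 1)" using tnorm_incseq[of z] Kn0 that(1) by (simp add: incseq_def)
    have "\<delta> / 2 < tnorm z n0" using that(2) m2 \<delta> unfolding \<delta>_def by auto
    moreover have "norm (z k) / real k < \<delta> / 2" using bigk[OF that(1)] that(2) by auto
    ultimately show ?thesis using mono by linarith
  qed
  define P where "P m = {k\<in>{2..K}. tnorm (xs m) (k - 1) \<le> norm (xs m k) / real k}" for m
  have "\<exists>a0\<in>{m2..}. infinite {a\<in>{m2..}. P a = P a0}"
  proof (rule pigeonhole_infinite)
    show "infinite {m2..}" by (rule infinite_Ici)
    have "P ` {m2..} \<subseteq> Pow {2..K}" unfolding P_def by auto
    then show "finite (P ` {m2..})" by (rule finite_subset) simp
  qed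
  then obtain a0 where a0: "a0 \<ge> m2" and Minf: "infinite {a\<in>{m2..}. P a = P a0}" by auto
  define M where "M = {a\<in>{m2..}. P a = P a0}"
  define p where "p k = (k \<in> P a0)" for k
  have pK: "\<forall>k>K. \<not> p k" unfolding p_def P_def by auto
  have cxs: "compat p (xs m)" if "m \<in> M" for m
    unfolding compat_def
  proof (intro allI impI conjI)
    fix k :: nat assume k2: "k \<ge> 2"
    have mm: "m \<ge> m2" "P m = P a0" using that unfolding M_def by auto
    { assume "p k"
      then have "k \<in> P m" using mm(2) unfolding p_def by simp
      then show "tnorm (xs m) (k - 1) \<le> norm (xs m k) / real k" unfolding P_def by simp }
    { assume np: "\<not> p k"
      show "norm (xs m k) / real k \<le> tnorm (xs m) (k - 1)"
      proof (cases "k \<le> K")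
        case True
        have "k \<notin> P m" using np mm(2) unfolding p_def by simp
        then have "\<not> tnorm (xs m) (k - 1) \<le> norm (xs m k) / real k" using True k2 unfolding P_def by simp
        then show ?thesis by simp
      next
        case False
        have "norm (xs m k) / real k < tnorm (xs m) (k - 1)" using False mm(1) by (intro tail) auto
        then show ?thesis by simp
      qed }
  qed
  have cx: "compat p x"
    unfolding compat_def
  proof (intro allI impI conjI)
    fix k :: nat assume k2: "k \<ge> 2"
    { assume pk: "p k"
      then have kP: "k \<in> P a0" unfolding p_def by simp
      then have kK: "k \<in> {2..K}" unfolding P_def by simp
      from kP have "tnorm (xs a0) (k - 1) \<le> norm (xs a0 k) / real k" unfolding P_def by simp
      then have "\<not> g (xs a0) k < 0" unfolding g_def by simp
      then have "\<not> g x k < 0" using m2[OF a0] kK by blast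
      then show "tnorm x (k - 1) \<le> norm (x k) / real k" unfolding g_def by simp }
    { assume np: "\<not> p k"
      show "norm (x k) / real k \<le> tnorm x (k - 1)"
      proof (cases "k \<le> K")
        case True
        then have kK: "k \<in> {2..K}" using k2 by simp
        then have "\<not> tnorm (xs a0) (k - 1) \<le> norm (xs a0 k) / real k" using np unfolding p_def P_def by auto
        then have "\<not> g (xs a0) k > 0" unfolding g_def by simp
        then have "\<not> g x k > 0" using m2[OF a0] kK by blast
        then show ?thesis unfolding g_def by simp
      next
        case False then show ?thesis using tail[of k x] by force
      qed }
  qed
  have "same_repr (xs ` M \<union> {x})"
    by (rule same_repr_crit[OF pK]) (use cxs cx sxs sx in auto)
  then show ?thesis using Minf unfolding M_def by blast
qed

end
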